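(* If $B,C\in \mathcal{B}_{A}(\mathcal{H})$, then \begin{align*} d\omega _{A_{0}}^{4}\left( \begin{bmatrix} 0 & B \\ C & 0 \end{bmatrix} \right) &\leq \max \left\{ \omega _{A}\left( \left( C^{\sharp _{A}}C\right) ^{2}+\left( C^{\sharp _{A}}C\right) ^{4}\right) ,\omega _{A}\left( \left( B^{\sharp _{A}}B\right) ^{2}+\left( B^{\sharp _{A}}B\right) ^{4}\right) \right\} \\ &\quad+2\omega _{A_{0}}^{2}\left( \begin{bmatrix} 0 & C^{\sharp _{A}}CB \\ B^{\sharp _{A}}BC & 0 \end{bmatrix} \right). \end{align*}
   Context: $\mathcal{H}$ is a complex Hilbert space and $A\in\mathcal{B}(\mathcal{H})$ is a positive operator; $\langle x,z\rangle_A=\langle Ax,z\rangle$ and $\|z\|_A=\|A^{1/2}z\|$. $\mathcal{B}_A(\mathcal{H})$ denotes the set of bounded operators $S$ on $\mathcal{H}$ admitting an $A$-adjoint; $S^{\sharp_A}=A^{\dagger}S^*A$ is the distinguished $A$-adjoint ($A^\dagger$ the Moore-Penrose inverse). $\omega_A(S)=\sup\{|\langle Sz,z\rangle_A|:\|z\|_A=1\}$ is the $A$-numerical radius. $A_0=\begin{bmatrix} A&0\\0&A\end{bmatrix}$ on $\mathcal{H}\oplus\mathcal{H}$ induces $\langle x,z\rangle_{A_0}=\langle x_1,z_1\rangle_A+\langle x_2,z_2\rangle_A$; $\omega_{A_0}$ is the $A_0$-numerical radius and $d\omega_{A_0}(X)=\sup\{(|\langle Xz,z\rangle_{A_0}|^2+\|Xz\|_{A_0}^4)^{1/2}:\|z\|_{A_0}=1\}$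 is the $A_0$-Davis-Wielandt radius. *)

theory Defs
  imports "HOL-Analysis.Analysis"
begin

class scaleC = scaleR +
  fixes scaleC :: "complex \<Rightarrow> 'a \<Rightarrow> 'a" (infixr "*\<^sub>C" 75)
  assumes scaleR_scaleC: "scaleR r = scaleC (complex_of_real r)"

class complex_vector = scaleC + ab_group_add +
  assumes scaleC_add_right: "a *\<^sub>C (x + y) = a *\<^sub>C x + a *\<^sub>C y"
    and scaleC_add_left: "(a + b) *\<^sub>C x = a *\<^sub>C x + b *\<^sub>C x"
    and scaleC_scaleC: "a *\<^sub>C (b *\<^sub>C x) = (a * b) *\<^sub>C x"
    and scaleC_one: "1 *\<^sub>C x = x"

class complex_inner = complex_vector + real_normed_vector +
  fixes cinner :: "'a \<Rightarrow> 'a \<Rightarrow> complex"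
  assumes cinner_commute: "cinner x y = cnj (cinner y x)"
    and cinner_add_left: "cinner (x + y) z = cinner x z + cinner y z"
    and cinner_scaleC_left: "cinner (r *\<^sub>C x) y = r * cinner x y"
    and cinner_nonneg: "0 \<le> Re (cinner x x)"
    and cinner_eq_zero_iff: "cinner x x = 0 \<longleftrightarrow> x = 0"
    and norm_eq_sqrt_cinner: "norm x = sqrt (Re (cinner x x))"

class chilbert_space = complex_inner + complete_space

definition cbounded_linear :: "('a::complex_inner \<Rightarrow> 'a) \<Rightarrow> bool" where
  "cbounded_linear f \<longleftrightarrow> (\<forall>x y. f (x + y) = f x + f y) \<and> (\<forall>c x. f (c *\<^sub>C x) = c *\<^sub>C f x)
     \<and> (\<exists>K. \<forall>x. norm (f x) \<le> norm x * K)"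

definition cadj :: "('a::complex_inner \<Rightarrow> 'a) \<Rightarrow> ('a \<Rightarrow> 'a)" where
  "cadj T = (THE T'. \<forall>x y. cinner (T x) y = cinner x (T' y))"

definition positive_op :: "('a::complex_inner \<Rightarrow> 'a) \<Rightarrow> bool" where
  "positive_op A \<longleftrightarrow> cbounded_linear A \<and> (\<forall>x. Im (cinner (A x) x) = 0 \<and> 0 \<le> Re (cinner (A x) x))"

definition cinnerA :: "('a::complex_inner \<Rightarrow> 'a) \<Rightarrow> 'a \<Rightarrow> 'a \<Rightarrow> complex" where
  "cinnerA A x z = cinner (A x) z"

text \<open>\<open>\<parallel>z\<parallel>_A = \<parallel>A^(1/2) z\<parallel> = sqrt \<langle>Az,z\<rangle>\<close>.\<close>
definition normA :: "('a::complex_inner \<Rightarrow> 'a) \<Rightarrow> 'a \<Rightarrow> real" where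
  "normA A z = sqrt (Re (cinner (A z) z))"

definition BA :: "('a::complex_inner \<Rightarrow> 'a) \<Rightarrow> ('a \<Rightarrow> 'a) set" where
  "BA A = {S. cbounded_linear S \<and>
      (\<exists>T. cbounded_linear T \<and> (\<forall>x y. cinnerA A (S x) y = cinnerA A x (T y)))}"

definition mp_inv :: "('a::complex_inner \<Rightarrow> 'a) \<Rightarrow> 'a \<Rightarrow> 'a" where
  "mp_inv A y = (THE z. (\<forall>k. A k = 0 \<longrightarrow> cinner z k = 0) \<and> A z = y)"

definition sharpA :: "('a::complex_inner \<Rightarrow> 'a) \<Rightarrow> ('a \<Rightarrow> 'a) \<Rightarrow> ('a \<Rightarrow> 'a)" where
  "sharpA A S = (\<lambda>x. mp_inv A (cadj S (A x)))"

definition omegaA :: "('a::complex_inner \<Rightarrow> 'a) \<Rightarrow> ('a \<Rightarrow> 'a) \<Rightarrow> real" where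
  "omegaA A S = Sup {cmod (cinnerA A (S z) z) | z. normA A z = 1}"

definition cinnerA0 :: "('a::complex_inner \<Rightarrow> 'a) \<Rightarrow> 'a \<times> 'a \<Rightarrow> 'a \<times> 'a \<Rightarrow> complex" where
  "cinnerA0 A x z = cinnerA A (fst x) (fst z) + cinnerA A (snd x) (snd z)"

definition normA0 :: "('a::complex_inner \<Rightarrow> 'a) \<Rightarrow> 'a \<times> 'a \<Rightarrow> real" where
  "normA0 A z = sqrt (Re (cinnerA0 A z z))"

definition opmat :: "('a::complex_inner \<Rightarrow> 'a) \<Rightarrow> ('a \<Rightarrow> 'a) \<Rightarrow> ('a \<Rightarrow> 'a) \<Rightarrow> ('a \<Rightarrow> 'a)
    \<Rightarrow> ('a \<times> 'a \<Rightarrow> 'a \<times> 'a)" where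
  "opmat P Q R S = (\<lambda>x. (P (fst x) + Q (snd x), R (fst x) + S (snd x)))"

definition omegaA0 :: "('a::complex_inner \<Rightarrow> 'a) \<Rightarrow> ('a \<times> 'a \<Rightarrow> 'a \<times> 'a) \<Rightarrow> real" where
  "omegaA0 A X = Sup {cmod (cinnerA0 A (X z) z) | z. normA0 A z = 1}"

definition dwA0 :: "('a::complex_inner \<Rightarrow> 'a) \<Rightarrow> ('a \<times> 'a \<Rightarrow> 'a \<times> 'a) \<Rightarrow> real" where
  "dwA0 A X = Sup {sqrt ((cmod (cinnerA0 A (X z) z))\<^sup>2 + (normA0 A (X z)) ^ 4) | z. normA0 A z = 1}"

end

theory Submission
  imports Defs
begin

lemma scaleC_zero_left' [simp]: "(0::complex) *\<^sub>C (x::'a::complex_vector) = 0"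
proof -
  have "(0::complex) *\<^sub>C x = (0 + 0) *\<^sub>C x" by simp
  also have "\<dots> = 0 *\<^sub>C x + 0 *\<^sub>C x" by (rule scaleC_add_left)
  finally show ?thesis by simp
qed

lemma scaleC_zero_right' [simp]: "c *\<^sub>C (0::'a::complex_vector) = 0"
proof -
  have "c *\<^sub>C (0::'a) = c *\<^sub>C (0 + 0)" by simp
  also have "\<dots> = c *\<^sub>C 0 + c *\<^sub>C 0" by (rule scaleC_add_right)
  finally show ?thesis by simp
qed

lemma scaleC_diff_right': "c *\<^sub>C ((x::'a::complex_vector) - y) = c *\<^sub>C x - c *\<^sub>C y"
proof -
  have "c *\<^sub>C (x - y) + c *\<^sub>C y = c *\<^sub>C x" by (metis scaleC_add_right diff_add_cancel)
  then show ?thesis by (metis add_diff_cancel)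
qed

lemma scaleC_diff_left': "(a - b) *\<^sub>C (x::'a::complex_vector) = a *\<^sub>C x - b *\<^sub>C x"
proof -
  have "(a - b) *\<^sub>C x + b *\<^sub>C x = a *\<^sub>C x" by (metis scaleC_add_left diff_add_cancel)
  then show ?thesis by (metis add_diff_cancel)
qed

lemma scaleC_one' [simp]: "(1::complex) *\<^sub>C (x::'a::complex_vector) = x"
  by (rule scaleC_one)

locale sip =
  fixes ip :: "'v::ab_group_add \<Rightarrow> 'v \<Rightarrow> complex" and sc :: "complex \<Rightarrow> 'v \<Rightarrow> 'v"
  assumes add_left: "ip (x + y) z = ip x z + ip y z"
    and sc_left: "ip (sc c x) y = c * ip x y"
    and herm: "ip x y = cnj (ip y x)"
    and pos: "0 \<le> Re (ip x x)"
begin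

lemma add_right: "ip x (y + z) = ip x y + ip x z"
  by (metis add_left herm complex_cnj_add)

lemma sc_right: "ip x (sc c y) = cnj c * ip x y"
  by (metis sc_left herm complex_cnj_mult complex_cnj_cnj)

lemma diff_left: "ip (x - y) z = ip x z - ip y z"
  by (metis add_left diff_add_cancel eq_diff_eq)

lemma diff_right: "ip x (y - z) = ip x y - ip x z"
  by (metis diff_left herm complex_cnj_diff)

lemma zero_left [simp]: "ip 0 y = 0"
  by (metis diff_left diff_self)

lemma zero_right [simp]: "ip y 0 = 0"
  by (metis diff_right diff_self)

lemma Im_diag: "Im (ip x x) = 0"
  by (metis herm cnj.simps(2) neg_equal_zero)

lemma real_diag: "ip x x = complex_of_real (Re (ip x x))"
  using Im_diag by (simp add: complex_eq_iff)

lemma expand: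
  "Re (ip (x - sc t y) (x - sc t y)) = Re (ip x x) - 2 * Re (cnj t * ip x y) + (cmod t)^2 * Re (ip y y)"
proof -
  have "ip (x - sc t y) (x - sc t y) = ip x x - cnj t * ip x y - t * ip y x + t * cnj t * ip y y"
    by (simp add: diff_left diff_right sc_left sc_right algebra_simps)
  moreover have "ip y x = cnj (ip x y)" by (rule herm)
  moreover have "Re (t * cnj (ip x y)) = Re (cnj t * ip x y)" by simp
  moreover have "t * cnj t * ip y y = complex_of_real ((cmod t)^2 * Re (ip y y))"
  proof -
    have "t * cnj t = complex_of_real ((cmod t)^2)" by (rule complex_norm_square[symmetric])
    then show ?thesis by (subst real_diag) simp
  qed
  ultimately show ?thesis by simp
qed

lemma cs: "(cmod (ip x y))^2 \<le> Re (ip x x) * Re (ip y y)"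
proof (cases "Re (ip y y) = 0")
  case False
  then have b: "Re (ip y y) > 0" using pos[of y] by simp
  define t where "t = ip x y / complex_of_real (Re (ip y y))"
  have "0 \<le> Re (ip (x - sc t y) (x - sc t y))" by (rule pos)
  also have "\<dots> = Re (ip x x) - 2 * Re (cnj t * ip x y) + (cmod t)^2 * Re (ip y y)" by (rule expand)
  also have "cnj t * ip x y = complex_of_real ((cmod (ip x y))^2 / Re (ip y y))"
  proof -
    have "cnj t * ip x y = (ip x y * cnj (ip x y)) / complex_of_real (Re (ip y y))"
      by (simp add: t_def)
    also have "ip x y * cnj (ip x y) = complex_of_real ((cmod (ip x y))^2)" by (rule complex_norm_square[symmetric])
    finally show ?thesis by simp
  qed
  also have "(cmod t)^2 * Re (ip y y) = (cmod (ip x y))^2 / Re (ip y y)"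
    using b by (simp add: t_def norm_divide power2_eq_square)
  finally have "0 \<le> Re (ip x x) - (cmod (ip x y))^2 / Re (ip y y)" by simp
  then show ?thesis using b by (simp add: field_simps)
next
  case True
  show ?thesis
  proof (rule ccontr)
    assume "\<not> ?thesis"
    then have c: "cmod (ip x y) > 0" using True by auto
    define s where "s = (Re (ip x x) + 1) / (cmod (ip x y))^2"
    define t where "t = complex_of_real s * ip x y"
    have "0 \<le> Re (ip (x - sc t y) (x - sc t y))" by (rule pos)
    also have "\<dots> = Re (ip x x) - 2 * Re (cnj t * ip x y) + (cmod t)^2 * Re (ip y y)" by (rule expand)
    also have "cnj t * ip x y = complex_of_real (s * (cmod (ip x y))^2)"
    proof -
      have "cnj t * ip x y = complex_of_real s * (ip x y * cnj (ip x y))"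
        by (simp add: t_def)
      also have "ip x y * cnj (ip x y) = complex_of_real ((cmod (ip x y))^2)" by (rule complex_norm_square[symmetric])
      finally show ?thesis by simp
    qed
    also have "s * (cmod (ip x y))^2 = Re (ip x x) + 1" using c by (simp add: s_def)
    finally show False using True pos[of x] by simp
  qed
qed

lemma cs_sqrt: "cmod (ip x y) \<le> sqrt (Re (ip x x)) * sqrt (Re (ip y y))"
  by (metis cs real_sqrt_le_mono real_sqrt_abs abs_norm_cancel real_sqrt_mult)

end

lemma scaleC_minus_left': "(- c) *\<^sub>C (x::'a::complex_vector) = - (c *\<^sub>C x)"
proof -
  have "(- c) *\<^sub>C x + c *\<^sub>C x = (- c + c) *\<^sub>C x" by (rule scaleC_add_left[symmetric])
  then have "(- c) *\<^sub>C x + c *\<^sub>C x = 0" by simp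
  then show ?thesis by (simp add: eq_neg_iff_add_eq_0)
qed

lemma cinner_sip: "sip (cinner :: 'a::complex_inner \<Rightarrow> 'a \<Rightarrow> complex) scaleC"
  by unfold_locales (auto intro: cinner_add_left cinner_scaleC_left cinner_commute cinner_nonneg)

lemma norm_sq: "(norm (x::'a::complex_inner))^2 = Re (cinner x x)"
  by (simp add: norm_eq_sqrt_cinner cinner_nonneg)

lemma cinner_cs: "cmod (cinner x y) \<le> norm (x::'a::complex_inner) * norm y"
  using sip.cs_sqrt[OF cinner_sip, of x y] by (simp add: norm_eq_sqrt_cinner)

lemma cinner_zero_right' [simp]: "cinner (x::'a::complex_inner) 0 = 0"
  by (rule sip.zero_right[OF cinner_sip])

lemma cinner_zero_left' [simp]: "cinner 0 (x::'a::complex_inner) = 0"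
  by (rule sip.zero_left[OF cinner_sip])

lemma cinner_ext_right:
  assumes "\<And>z. cinner z a = cinner z (b::'a::complex_inner)" shows "a = b"
proof -
  have "cinner (a - b) (a - b) = 0"
    using assms[of "a - b"] by (simp add: sip.diff_right[OF cinner_sip])
  then show ?thesis by (simp add: cinner_eq_zero_iff)
qed

lemma norm_expand:
  "(norm (x - c *\<^sub>C y))^2 = (norm (x::'a::complex_inner))^2 - 2 * Re (cnj c * cinner x y) + (cmod c)^2 * (norm y)^2"
  using sip.expand[OF cinner_sip, of x c y] by (simp add: norm_sq)

lemma norm_scaleC': "norm (c *\<^sub>C (x::'a::complex_inner)) = cmod c * norm x"
proof -
  have "(norm (c *\<^sub>C x))^2 = (cmod c * norm x)^2"
    using norm_expand[of 0 "-c" x] by (simp add: power_mult_distrib scaleC_minus_left')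
  then show ?thesis by (simp add: power2_eq_iff_nonneg)
qed

lemma parallelogram:
  "(norm (a - b))^2 + (norm (a + b))^2 = 2 * (norm (a::'a::complex_inner))^2 + 2 * (norm b)^2"
proof -
  have e: "a - (-1::complex) *\<^sub>C b = a + b" using scaleC_minus_left'[of 1 b] by simp
  have "(norm (a + b))^2 = (norm a)^2 + 2 * Re (cinner a b) + (norm b)^2"
    using norm_expand[of a "-1" b] unfolding e by simp
  moreover have "(norm (a - b))^2 = (norm a)^2 - 2 * Re (cinner a b) + (norm b)^2"
    using norm_expand[of a 1 b] by simp
  ultimately show ?thesis by simp
qed

lemma proj_exists:
  fixes M :: "'a::chilbert_space set" and x :: 'a
  assumes clo: "\<And>s l. (\<forall>n. s n \<in> M) \<Longrightarrow> s \<longlonglongrightarrow> l \<Longrightarrow> l \<in> M"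
    and z: "0 \<in> M" and ad: "\<And>a b. a \<in> M \<Longrightarrow> b \<in> M \<Longrightarrow> a + b \<in> M"
    and sm: "\<And>c a. a \<in> M \<Longrightarrow> c *\<^sub>C a \<in> M"
  shows "\<exists>m\<in>M. \<forall>k\<in>M. cinner (x - m) k = 0"
proof -
  define S where "S = (\<lambda>k. norm (x - k)) ` M"
  define d where "d = Inf S"
  have Sne: "S \<noteq> {}" using z by (auto simp: S_def)
  have Sbd: "bdd_below S" by (auto simp: S_def intro!: bdd_belowI[of _ 0])
  have low: "d \<le> norm (x - k)" if "k \<in> M" for k
    unfolding d_def using Sbd that by (auto simp: S_def intro!: cInf_lower)
  have d0: "0 \<le> d" unfolding d_def using Sne by (auto simp: S_def intro!: cInf_greatest)
  have ex: "\<exists>k\<in>M. (norm (x - k))^2 < d^2 + inverse (real (Suc n))" for n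
  proof -
    have "d < sqrt (d^2 + inverse (real (Suc n)))"
      by (rule real_less_rsqrt) simp
    then obtain s where "s \<in> S" "s < sqrt (d^2 + inverse (real (Suc n)))"
      using cInf_lessD[OF Sne] d_def by blast
    then obtain k where "k \<in> M" "norm (x - k) < sqrt (d^2 + inverse (real (Suc n)))"
      by (auto simp: S_def)
    moreover have "(norm (x - k))^2 < (sqrt (d^2 + inverse (real (Suc n))))^2"
      using calculation(2) by (intro power_strict_mono) auto
    ultimately show ?thesis by auto
  qed
  then have "\<forall>n. \<exists>k. k \<in> M \<and> (norm (x - k))^2 < d^2 + inverse (real (Suc n))" by blast
  then obtain k where kk0: "\<forall>n. k n \<in> M \<and> (norm (x - k n))^2 < d^2 + inverse (real (Suc n))"
    by (rule choice[THEN exE])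
  have kM: "\<And>n. k n \<in> M" using kk0 by blast
  have kd: "\<And>n. (norm (x - k n))^2 < d^2 + inverse (real (Suc n))" using kk0 by blast
  have kk: "(norm (k i - k j))^2 \<le> 2 * inverse (real (Suc i)) + 2 * inverse (real (Suc j))" for i j
  proof -
    define mid where "mid = (1/2::complex) *\<^sub>C (k i + k j)"
    have midM: "mid \<in> M" using kM ad sm by (simp add: mid_def)
    have e1: "(x - k j) - (x - k i) = k i - k j" by simp
    have e2: "(x - k i) + (x - k j) = (2::complex) *\<^sub>C (x - mid)"
    proof -
      have "(2::complex) *\<^sub>C mid = k i + k j"
        by (simp add: mid_def scaleC_scaleC)
      moreover have "(2::complex) *\<^sub>C x = x + x"
        by (metis one_add_one scaleC_add_left scaleC_one)
      ultimately have h: "(2::complex) *\<^sub>C (x - mid) = (x + x) - (k i + k j)"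
        using scaleC_diff_right'[of 2 x mid] by simp
      have g: "(x - k i) + (x - k j) = (x + x) - (k i + k j)" by (simp add: algebra_simps)
      show ?thesis by (simp only: g h)
    qed
    have "norm ((x - k i) + (x - k j)) = 2 * norm (x - mid)"
      by (simp add: e2 norm_scaleC')
    then have "(norm ((x - k i) + (x - k j)))^2 \<ge> 4 * d^2"
      using low[OF midM] d0 by (simp add: power_mult_distrib power_mono)
    moreover have "(norm ((x - k j) - (x - k i)))^2 + (norm ((x - k j) + (x - k i)))^2
        = 2 * (norm (x - k j))^2 + 2 * (norm (x - k i))^2" by (rule parallelogram)
    ultimately show ?thesis using kd[of i] kd[of j] by (simp add: e1 add.commute)
  qed
  have "Cauchy k"
  proof (rule CauchyI)
    fix e :: real assume e: "0 < e"
    obtain N :: nat where N: "4 / e^2 < real N" using reals_Archimedean2 by blast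
    show "\<exists>M. \<forall>m\<ge>M. \<forall>n\<ge>M. norm (k m - k n) < e"
    proof (intro exI allI impI)
      fix m n assume mn: "N \<le> m" "N \<le> n"
      have "inverse (real (Suc m)) \<le> inverse (real (Suc N))"
        using mn by (simp add: le_imp_inverse_le)
      moreover have "inverse (real (Suc n)) \<le> inverse (real (Suc N))"
        using mn by (simp add: le_imp_inverse_le)
      moreover have "4 * inverse (real (Suc N)) < e^2"
      proof -
        have "0 < e^2" using e by simp
        have h: "4 < e^2 * real N" using N e by (simp add: field_simps)
        have "e^2 * real (Suc N) = e^2 * real N + e^2" by (simp add: algebra_simps)
        then have "4 < e^2 * real (Suc N)" using h \<open>0 < e^2\<close> by linarith
        then show ?thesis by (simp add: field_simps)
      qed
      ultimately have "(norm (k m - k n))^2 < e^2" using kk[of m n] by linarith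
      then show "norm (k m - k n) < e" using e by (simp add: power_less_imp_less_base)
    qed
  qed
  then obtain m where km: "k \<longlonglongrightarrow> m" using Cauchy_convergent_iff convergent_def by blast
  have mM: "m \<in> M" using clo[OF _ km] kM by blast
  have "(\<lambda>n. (norm (x - k n))^2) \<longlonglongrightarrow> (norm (x - m))^2"
    by (intro tendsto_intros km)
  moreover have "(\<lambda>n. d^2 + inverse (real (Suc n))) \<longlonglongrightarrow> d^2 + 0"
    by (intro tendsto_intros LIMSEQ_inverse_real_of_nat)
  ultimately have "(norm (x - m))^2 \<le> d^2 + 0"
  proof (rule LIMSEQ_le)
    show "\<exists>N. \<forall>n\<ge>N. (norm (x - k n))^2 \<le> d^2 + inverse (real (Suc n))"
      using kd by (intro exI[of _ 0] allI impI) (simp add: less_imp_le)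
  qed
  then have mlim: "(norm (x - m))^2 \<le> d^2" by simp
  have minim: "norm (x - m) \<le> norm (x - k')" if "k' \<in> M" for k'
  proof -
    have "d^2 \<le> (norm (x - k'))^2" using low[OF that] d0 by (intro power_mono) auto
    then have "(norm (x - m))^2 \<le> (norm (x - k'))^2" using mlim by (rule order_trans[rotated])
    then show ?thesis by (rule power2_le_imp_le) simp
  qed
  show ?thesis
  proof (intro bexI[OF _ mM] ballI)
    fix k' assume k'M: "k' \<in> M"
    define c where "c = cinner (x - m) k'"
    show "cinner (x - m) k' = 0"
    proof (rule ccontr)
      assume "cinner (x - m) k' \<noteq> 0"
      then have c0: "cmod c > 0" unfolding c_def by simp
      define t :: real where "t = 1 / ((norm k')^2 + 1)"
      have pp: "0 < (norm k')^2 + 1" using zero_le_power2[of "norm k'"] by linarith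
      have t0: "t > 0" unfolding t_def using pp by (rule divide_pos_pos[OF zero_less_one])
      have "t * (norm k')^2 = (norm k')^2 / ((norm k')^2 + 1)" by (simp add: t_def)
      also have "\<dots> < 1" using pp by (subst divide_less_eq_1_pos) auto
      finally have tk: "t * (norm k')^2 < 1" .
      define s where "s = complex_of_real t * c"
      have "m + s *\<^sub>C k' \<in> M" by (intro ad sm mM k'M)
      then have "norm (x - m) \<le> norm (x - (m + s *\<^sub>C k'))" by (rule minim)
      also have "x - (m + s *\<^sub>C k') = (x - m) - s *\<^sub>C k'" by simp
      finally have "(norm (x - m))^2 \<le> (norm ((x - m) - s *\<^sub>C k'))^2"
        by (simp add: power_mono)
      also have "\<dots> = (norm (x - m))^2 - 2 * Re (cnj s * c) + (cmod s)^2 * (norm k')^2"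
        by (simp add: norm_expand c_def)
      also have "cnj s * c = complex_of_real (t * (cmod c)^2)"
      proof -
        have "c * cnj c = complex_of_real ((cmod c)^2)" by (rule complex_norm_square[symmetric])
        then show ?thesis by (simp add: s_def mult.commute mult.left_commute)
      qed
      also have "(cmod s)^2 = t^2 * (cmod c)^2"
        using t0 by (simp add: s_def norm_mult power_mult_distrib)
      finally have "2 * (t * (cmod c)^2) \<le> t^2 * (cmod c)^2 * (norm k')^2" by simp
      then have "2 * (t * (cmod c)^2) \<le> (t * (norm k')^2) * (t * (cmod c)^2)"
        by (simp add: power2_eq_square algebra_simps)
      moreover have "t * (cmod c)^2 > 0" using t0 c0 by simp
      ultimately have "2 \<le> t * (norm k')^2" by (rule mult_right_le_imp_le)
      then show False using tk by simp
    qed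
  qed
qed

lemma cbl_add: "cbounded_linear f \<Longrightarrow> f (x + y) = f x + f y"
  by (simp add: cbounded_linear_def)

lemma cbl_scale: "cbounded_linear f \<Longrightarrow> f (c *\<^sub>C x) = c *\<^sub>C f x"
  by (simp add: cbounded_linear_def)

lemma cbl_zero: "cbounded_linear f \<Longrightarrow> f 0 = 0"
  using cbl_add[of f 0 0] by simp

lemma cbl_diff: "cbounded_linear f \<Longrightarrow> f (x - y) = f x - f y"
  using cbl_add[of f "x - y" y] by (simp add: eq_diff_eq)

lemma cbl_bound: "cbounded_linear f \<Longrightarrow> \<exists>K\<ge>0. \<forall>x. norm (f x) \<le> K * norm x"
proof -
  assume "cbounded_linear f"
  then obtain K where K: "\<And>x. norm (f x) \<le> norm x * K" unfolding cbounded_linear_def by blast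
  have "norm (f x) \<le> \<bar>K\<bar> * norm x" for x
  proof -
    have "norm x * K \<le> norm x * \<bar>K\<bar>" by (intro mult_left_mono) auto
    then show ?thesis using K[of x] by (simp add: mult.commute)
  qed
  then show ?thesis by (intro exI[of _ "\<bar>K\<bar>"]) simp
qed

lemma lip_seq_closed:
  fixes f :: "'a::real_normed_vector \<Rightarrow> 'b::real_normed_vector"
  assumes lip: "\<And>a b. norm (f a - f b) \<le> L * norm (a - b)"
    and s0: "\<forall>n. f (s n) = 0" and sl: "s \<longlonglongrightarrow> l"
  shows "f l = 0"
proof -
  have "(\<lambda>n. L * norm (s n - l)) \<longlonglongrightarrow> L * norm (l - l)"
    by (intro tendsto_intros sl)
  then have g: "(\<lambda>n. L * norm (s n - l)) \<longlonglongrightarrow> 0" by simp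
  have "(\<lambda>n. f (s n) - f l) \<longlonglongrightarrow> 0"
    by (rule Lim_null_comparison[OF _ g]) (simp add: lip)
  then have "(\<lambda>n. - f l) \<longlonglongrightarrow> 0" using s0 by simp
  then have "- f l = 0" by (simp add: LIMSEQ_const_iff)
  then show ?thesis by simp
qed

lemma cbl_lip:
  assumes "cbounded_linear (f :: 'a::complex_inner \<Rightarrow> 'a)"
  obtains K where "K \<ge> 0" "\<And>a b. norm (f a - f b) \<le> K * norm (a - b)"
proof -
  obtain K where K: "K \<ge> 0" "\<And>x. norm (f x) \<le> K * norm x" using cbl_bound[OF assms] by blast
  show ?thesis by (rule that[OF K(1)]) (metis K(2) cbl_diff[OF assms])
qed

lemma riesz:
  fixes C :: "'a::chilbert_space \<Rightarrow> 'a"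
  assumes C: "cbounded_linear C"
  shows "\<exists>w. \<forall>x. cinner (C x) y = cinner x w"
proof -
  define f where "f x = cinner (C x) y" for x
  obtain K where K: "K \<ge> 0" "\<And>x. norm (C x) \<le> K * norm x" using cbl_bound[OF C] by blast
  have fdiff: "f a - f b = f (a - b)" for a b
    by (simp add: f_def cbl_diff[OF C] sip.diff_left[OF cinner_sip])
  have fadd: "f (a + b) = f a + f b" for a b
    by (simp add: f_def cbl_add[OF C] cinner_add_left)
  have fsc: "f (c *\<^sub>C a) = c * f a" for c a
    by (simp add: f_def cbl_scale[OF C] cinner_scaleC_left)
  have lip: "norm (f a - f b) \<le> (K * norm y) * norm (a - b)" for a b
  proof -
    have "norm (f a - f b) = cmod (cinner (C (a - b)) y)" unfolding fdiff by (simp add: f_def)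
    also have "\<dots> \<le> norm (C (a - b)) * norm y" by (rule cinner_cs)
    also have "\<dots> \<le> (K * norm (a - b)) * norm y" by (intro mult_right_mono K(2)) simp
    finally show ?thesis by (simp add: algebra_simps)
  qed
  have f0: "f 0 = 0" by (simp add: f_def cbl_zero[OF C])
  show ?thesis
  proof (cases "\<forall>x. f x = 0")
    case True then show ?thesis by (intro exI[of _ 0]) (simp add: f_def)
  next
    case False
    then obtain x0 where x0: "f x0 \<noteq> 0" by blast
    have "\<exists>m\<in>{x. f x = 0}. \<forall>k\<in>{x. f x = 0}. cinner (x0 - m) k = 0"
    proof (rule proj_exists)
      fix s l assume "\<forall>n. s n \<in> {x. f x = 0}" "s \<longlonglongrightarrow> l"
      then show "l \<in> {x. f x = 0}" using lip_seq_closed[OF lip] by auto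
    qed (auto simp: f0 fadd fsc)
    then obtain m where mM: "f m = 0" and orth: "\<And>k. f k = 0 \<Longrightarrow> cinner (x0 - m) k = 0" by blast
    define u where "u = x0 - m"
    have fu: "f u = f x0" using fdiff[of x0 m] mM by (simp add: u_def)
    have uu: "cinner u u \<noteq> 0"
    proof
      assume "cinner u u = 0"
      then have "u = 0" by (simp add: cinner_eq_zero_iff)
      then show False using fu x0 f0 by simp
    qed
    have "f x = cinner x (cnj (f u / cinner u u) *\<^sub>C u)" for x
    proof -
      define g where "g = x - (f x / f u) *\<^sub>C u"
      have "f g = f x - (f x / f u) * f u" by (simp add: g_def fdiff[symmetric] fsc)
      also have "\<dots> = 0" using fu x0 by simp
      finally have "cinner u g = 0" using orth by (simp add: u_def)
      then have "cinner g u = 0" by (metis cinner_commute complex_cnj_zero)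
      then have "cinner x u - (f x / f u) * cinner u u = 0"
        by (simp add: g_def sip.diff_left[OF cinner_sip] cinner_scaleC_left)
      then have e: "cinner x u = (f x / f u) * cinner u u" by simp
      have "cinner x (cnj (f u / cinner u u) *\<^sub>C u) = (f u / cinner u u) * cinner x u"
        by (simp add: sip.sc_right[OF cinner_sip])
      also have "\<dots> = f x" using e uu fu x0 by (simp add: field_simps)
      finally show ?thesis by simp
    qed
    then have "\<forall>x. cinner (C x) y = cinner x (cnj (f u / cinner u u) *\<^sub>C u)"
      unfolding f_def by blast
    then show ?thesis by blast
  qed
qed

lemma cadj_prop:
  fixes C :: "'a::chilbert_space \<Rightarrow> 'a"
  assumes C: "cbounded_linear C"
  shows "cinner (C x) y = cinner x (cadj C y)"
proof -
  have "\<forall>y. \<exists>w. \<forall>x. cinner (C x) y = cinner x w" using riesz[OF C] by blast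
  then obtain T where T: "\<forall>y. \<forall>x. cinner (C x) y = cinner x (T y)" by (rule choice[THEN exE])
  have ex1: "\<exists>!T'. \<forall>x y. cinner (C x) y = cinner x (T' y)"
  proof (rule ex1I[of _ T])
    show "\<forall>x y. cinner (C x) y = cinner x (T y)" using T by blast
  next
    fix T' assume T': "\<forall>x y. cinner (C x) y = cinner x (T' y)"
    show "T' = T"
    proof
      fix y show "T' y = T y" by (rule cinner_ext_right) (metis T T')
    qed
  qed
  have "\<forall>x y. cinner (C x) y = cinner x (cadj C y)"
    unfolding cadj_def by (rule theI'[OF ex1])
  then show ?thesis by blast
qed

lemma mp_inv_eq:
  fixes A :: "'a::complex_inner \<Rightarrow> 'a"
  assumes A: "cbounded_linear A" and o: "\<forall>k. A k = 0 \<longrightarrow> cinner z k = 0" and y: "A z = y"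
  shows "mp_inv A y = z"
  unfolding mp_inv_def
proof (rule the_equality)
  show "(\<forall>k. A k = 0 \<longrightarrow> cinner z k = 0) \<and> A z = y" using o y by blast
next
  fix z' assume z': "(\<forall>k. A k = 0 \<longrightarrow> cinner z' k = 0) \<and> A z' = y"
  have "A (z' - z) = 0" using z' y by (simp add: cbl_diff[OF A])
  then have "cinner z' (z' - z) = 0" "cinner z (z' - z) = 0" using z' o by blast+
  then have "cinner (z' - z) (z' - z) = 0" by (simp add: sip.diff_left[OF cinner_sip])
  then show "z' = z" by (simp add: cinner_eq_zero_iff)
qed

lemma mp_inv_exists:
  fixes A :: "'a::chilbert_space \<Rightarrow> 'a"
  assumes A: "cbounded_linear A"
  shows "\<exists>z. (\<forall>k. A k = 0 \<longrightarrow> cinner z k = 0) \<and> A z = A v"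
proof -
  obtain K where K: "\<And>a b. norm (A a - A b) \<le> K * norm (a - b)" using cbl_lip[OF A] by blast
  have "\<exists>m\<in>{x. A x = 0}. \<forall>k\<in>{x. A x = 0}. cinner (v - m) k = 0"
  proof (rule proj_exists)
    fix s l assume "\<forall>n. s n \<in> {x. A x = 0}" "s \<longlonglongrightarrow> l"
    then show "l \<in> {x. A x = 0}" using lip_seq_closed[OF K] by auto
  qed (auto simp: cbl_zero[OF A] cbl_add[OF A] cbl_scale[OF A])
  then obtain m where "A m = 0" "\<forall>k. A k = 0 \<longrightarrow> cinner (v - m) k = 0" by blast
  then show ?thesis by (intro exI[of _ "v - m"]) (simp add: cbl_diff[OF A])
qed

lemma mp_inv_A:
  fixes A :: "'a::chilbert_space \<Rightarrow> 'a"
  assumes A: "cbounded_linear A"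
  shows "A (mp_inv A (A v)) = A v"
proof -
  obtain z where z: "\<forall>k. A k = 0 \<longrightarrow> cinner z k = 0" "A z = A v" using mp_inv_exists[OF A] by blast
  have "mp_inv A (A v) = z" by (rule mp_inv_eq[OF A z])
  then show ?thesis using z by simp
qed

lemma mp_inv_orth:
  fixes A :: "'a::chilbert_space \<Rightarrow> 'a"
  assumes A: "cbounded_linear A" and k: "A k = 0"
  shows "cinner (mp_inv A (A v)) k = 0"
proof -
  obtain z where z: "\<forall>k. A k = 0 \<longrightarrow> cinner z k = 0" "A z = A v" using mp_inv_exists[OF A] by blast
  have "mp_inv A (A v) = z" by (rule mp_inv_eq[OF A z])
  then show ?thesis using z k by simp
qed

lemma pos_selfadj:
  assumes A: "positive_op A"
  shows "cinner (A x) y = cinner x (A y)"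
proof -
  have L: "cbounded_linear A" and P: "\<And>x. Im (cinner (A x) x) = 0" using A by (auto simp: positive_op_def)
  define p where "p = cinner (A x) y"
  define q where "q = cinner (A y) x"
  have "cinner (A (x + y)) (x + y) = cinner (A x) x + p + q + cinner (A y) y"
    by (simp add: p_def q_def cbl_add[OF L] cinner_add_left sip.add_right[OF cinner_sip])
  then have i1: "Im p + Im q = 0" using P[of "x + y"] P[of x] P[of y] by simp
  have "cinner (A (x + \<i> *\<^sub>C y)) (x + \<i> *\<^sub>C y) = cinner (A x) x - \<i> * p + \<i> * q + cinner (A y) y"
    by (simp add: p_def q_def cbl_add[OF L] cbl_scale[OF L] cinner_add_left cinner_scaleC_left
        sip.add_right[OF cinner_sip] sip.sc_right[OF cinner_sip] distrib_left mult.assoc[symmetric])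
  then have i2: "Re q - Re p = 0" using P[of "x + \<i> *\<^sub>C y"] P[of x] P[of y] by simp
  have "cinner x (A y) = cnj q" by (simp add: q_def cinner_commute[of x])
  also have "cnj q = p" using i1 i2 by (simp add: complex_eq_iff)
  finally show ?thesis by (simp add: p_def)
qed

lemma cinnerA_sip:
  assumes A: "positive_op A"
  shows "sip (cinnerA A) scaleC"
proof -
  have L: "cbounded_linear A" using A by (simp add: positive_op_def)
  show ?thesis
  proof
    fix x y z :: 'a and c
    show "cinnerA A (x + y) z = cinnerA A x z + cinnerA A y z"
      by (simp add: cinnerA_def cbl_add[OF L] cinner_add_left)
    show "cinnerA A (c *\<^sub>C x) y = c * cinnerA A x y"
      by (simp add: cinnerA_def cbl_scale[OF L] cinner_scaleC_left)
    show "cinnerA A x y = cnj (cinnerA A y x)"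
      by (simp add: cinnerA_def pos_selfadj[OF A] cinner_commute[of x])
    show "0 \<le> Re (cinnerA A x x)" using A by (simp add: cinnerA_def positive_op_def)
  qed
qed

lemma BA_witness:
  assumes "C \<in> BA A"
  obtains T where "cbounded_linear C" "cbounded_linear T" "\<And>x y. cinnerA A (C x) y = cinnerA A x (T y)"
  using assms unfolding BA_def by blast

lemma sharp_eq:
  fixes A C T :: "'a::chilbert_space \<Rightarrow> 'a"
  assumes A: "positive_op A" and C: "cbounded_linear C"
    and T: "\<And>x y. cinnerA A (C x) y = cinnerA A x (T y)"
  shows "sharpA A C x = mp_inv A (A (T x))"
proof -
  have "cadj C (A x) = A (T x)"
  proof (rule cinner_ext_right)
    fix u
    have "cinner u (cadj C (A x)) = cinner (C u) (A x)" by (rule cadj_prop[OF C, symmetric])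
    also have "\<dots> = cinner (A (C u)) x" by (rule pos_selfadj[OF A, symmetric])
    also have "\<dots> = cinnerA A u (T x)" using T[of u x] by (simp add: cinnerA_def)
    also have "\<dots> = cinner u (A (T x))" by (simp add: cinnerA_def pos_selfadj[OF A])
    finally show "cinner u (cadj C (A x)) = cinner u (A (T x))" .
  qed
  then show ?thesis by (simp add: sharpA_def)
qed

lemma sharp_prop:
  fixes A C :: "'a::chilbert_space \<Rightarrow> 'a"
  assumes A: "positive_op A" and C: "C \<in> BA A"
  shows "cinnerA A (sharpA A C x) y = cinnerA A x (C y)"
proof -
  obtain T where Cl: "cbounded_linear C" and T: "\<And>x y. cinnerA A (C x) y = cinnerA A x (T y)"
    using BA_witness[OF C] by blast
  have L: "cbounded_linear A" using A by (simp add: positive_op_def)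
  have "cinnerA A (sharpA A C x) y = cinner (A (mp_inv A (A (T x)))) y"
    by (simp add: sharp_eq[OF A Cl T] cinnerA_def)
  also have "\<dots> = cinnerA A (T x) y" by (simp add: mp_inv_A[OF L] cinnerA_def)
  also have "\<dots> = cnj (cinnerA A y (T x))" by (rule sip.herm[OF cinnerA_sip[OF A]])
  also have "\<dots> = cnj (cinnerA A (C y) x)" by (simp add: T)
  also have "\<dots> = cinnerA A x (C y)" by (simp add: sip.herm[OF cinnerA_sip[OF A], of x])
  finally show ?thesis .
qed

lemma sharp_linear:
  fixes A C :: "'a::chilbert_space \<Rightarrow> 'a"
  assumes A: "positive_op A" and C: "C \<in> BA A"
  shows "sharpA A C (a + b) = sharpA A C a + sharpA A C b"
    and "sharpA A C (c *\<^sub>C a) = c *\<^sub>C sharpA A C a"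
proof -
  obtain T where Cl: "cbounded_linear C" and Tl: "cbounded_linear T"
    and T: "\<And>x y. cinnerA A (C x) y = cinnerA A x (T y)"
    using BA_witness[OF C] by blast
  have L: "cbounded_linear A" using A by (simp add: positive_op_def)
  note se = sharp_eq[OF A Cl T]
  show "sharpA A C (a + b) = sharpA A C a + sharpA A C b"
    unfolding se
  proof (rule mp_inv_eq[OF L])
    show "\<forall>k. A k = 0 \<longrightarrow> cinner (mp_inv A (A (T a)) + mp_inv A (A (T b))) k = 0"
      by (simp add: cinner_add_left mp_inv_orth[OF L])
    show "A (mp_inv A (A (T a)) + mp_inv A (A (T b))) = A (T (a + b))"
      by (simp add: cbl_add[OF L] cbl_add[OF Tl] mp_inv_A[OF L])
  qed
  show "sharpA A C (c *\<^sub>C a) = c *\<^sub>C sharpA A C a"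
    unfolding se
  proof (rule mp_inv_eq[OF L])
    show "\<forall>k. A k = 0 \<longrightarrow> cinner (c *\<^sub>C mp_inv A (A (T a))) k = 0"
      by (simp add: cinner_scaleC_left mp_inv_orth[OF L])
    show "A (c *\<^sub>C mp_inv A (A (T a))) = A (T (c *\<^sub>C a))"
      by (simp add: cbl_scale[OF L] cbl_scale[OF Tl] mp_inv_A[OF L])
  qed
qed

lemma normA_alt: "normA A x = sqrt (Re (cinnerA A x x))"
  by (simp add: normA_def cinnerA_def)

lemma normA_sq:
  assumes A: "positive_op A" shows "(normA A x)^2 = Re (cinnerA A x x)"
proof -
  have "0 \<le> Re (cinner (A x) x)" using A unfolding positive_op_def by blast
  then show ?thesis by (simp add: normA_alt cinnerA_def)
qed

lemma normA_nonneg: assumes A: "positive_op A" shows "0 \<le> normA A x"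
  by (simp add: normA_alt sip.pos[OF cinnerA_sip[OF A]])

lemma csA:
  assumes A: "positive_op A" shows "cmod (cinnerA A x y) \<le> normA A x * normA A y"
  using sip.cs_sqrt[OF cinnerA_sip[OF A]] by (simp add: normA_alt)

lemma normA_sc:
  assumes A: "positive_op A" shows "normA A (c *\<^sub>C x) = cmod c * normA A x"
proof -
  have "Re (cinnerA A (c *\<^sub>C x) (c *\<^sub>C x)) = (cmod c)^2 * Re (cinnerA A x x)"
    using sip.expand[OF cinnerA_sip[OF A], of 0 "-c" x]
    by (simp add: scaleC_minus_left' sip.zero_left[OF cinnerA_sip[OF A]] sip.zero_right[OF cinnerA_sip[OF A]])
  then show ?thesis by (simp add: normA_alt real_sqrt_mult)
qed

lemma sq_le_prod:
  assumes A: "positive_op A" and e: "cinnerA A u u = cinnerA A x v"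
  shows "(normA A u)^2 \<le> normA A x * normA A v"
proof -
  have "(normA A u)^2 = Re (cinnerA A x v)" using e by (simp add: normA_sq[OF A])
  also have "\<dots> \<le> cmod (cinnerA A x v)" by (rule complex_Re_le_cmod)
  also have "\<dots> \<le> normA A x * normA A v" by (rule csA[OF A])
  finally show ?thesis .
qed

lemma pow_trick:
  assumes A: "positive_op A"
  shows "(\<And>x y. cinnerA A (S x) y = cinnerA A x (S y)) \<Longrightarrow>
    normA A (S x) ^ (2^n) \<le> normA A x ^ (2^n - 1) * normA A ((S ^^ (2^n)) x)"
proof (induction n arbitrary: S)
  case 0
  then show ?case by simp
next
  case (Suc n)
  have sym2: "cinnerA A ((S \<circ> S) x) y = cinnerA A x ((S \<circ> S) y)" for x y
    using Suc.prems by simp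
  have key: "(normA A (S x))^2 \<le> normA A x * normA A (S (S x))"
    by (rule sq_le_prod[OF A]) (simp add: Suc.prems)
  have "normA A (S x) ^ (2^Suc n) = ((normA A (S x))^2) ^ (2^n)"
    by (simp add: power_mult[symmetric] mult.commute)
  also have "\<dots> \<le> (normA A x * normA A (S (S x))) ^ (2^n)"
    by (intro power_mono key) simp
  also have "\<dots> = normA A x ^ (2^n) * normA A ((S \<circ> S) x) ^ (2^n)"
    by (simp add: power_mult_distrib)
  also have "\<dots> \<le> normA A x ^ (2^n) * (normA A x ^ (2^n - 1) * normA A (((S \<circ> S) ^^ (2^n)) x))"
    by (intro mult_left_mono Suc.IH sym2) (simp_all add: normA_nonneg[OF A])
  also have "(S \<circ> S) ^^ (2^n) = S ^^ (2^Suc n)"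
  proof -
    have "S \<circ> S = S ^^ 2" by (simp add: numeral_2_eq_2)
    then show ?thesis by (simp add: funpow_mult mult.commute)
  qed
  also have "normA A x ^ (2^n) * (normA A x ^ (2^n - 1) * normA A ((S ^^ (2^Suc n)) x))
      = normA A x ^ (2^Suc n - 1) * normA A ((S ^^ (2^Suc n)) x)"
  proof -
    have "(2::nat)^n \<ge> 1" by simp
    then have "2^n + (2^n - 1) = (2::nat)^Suc n - 1" by simp
    then show ?thesis by (simp add: power_add[symmetric] mult.assoc)
  qed
  finally show ?case .
qed

lemma A_bounded_sym:
  fixes A S :: "'a::chilbert_space \<Rightarrow> 'a"
  assumes A: "positive_op A"
    and sym: "\<And>x y. cinnerA A (S x) y = cinnerA A x (S y)"
    and lin: "\<And>c x. S (c *\<^sub>C x) = c *\<^sub>C S x"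
    and bnd: "\<And>x. norm (S x) \<le> K0 * norm x"
  shows "\<exists>K\<ge>0. \<forall>x. normA A (S x) \<le> K * normA A x"
proof -
  define K where "K = max K0 1"
  have K1: "K \<ge> 1" by (simp add: K_def)
  have bndK: "norm (S x) \<le> K * norm x" for x
    using bnd[of x] by (smt (verit) K_def mult_right_mono norm_ge_zero max.cobounded1)
  have powb: "norm ((S ^^ N) x) \<le> K ^ N * norm x" for N x
  proof (induction N)
    case 0 then show ?case by simp
  next
    case (Suc N)
    have "norm ((S ^^ Suc N) x) = norm (S ((S ^^ N) x))" by simp
    also have "\<dots> \<le> K * norm ((S ^^ N) x)" by (rule bndK)
    also have "\<dots> \<le> K * (K ^ N * norm x)" using K1 Suc.IH by (intro mult_left_mono) auto
    finally show ?case by (simp add: mult.assoc)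
  qed
  have L: "cbounded_linear A" using A by (simp add: positive_op_def)
  obtain KA where KA: "KA \<ge> 0" "\<And>x. norm (A x) \<le> KA * norm x" using cbl_bound[OF L] by blast
  have nAb: "normA A y \<le> sqrt KA * norm y" for y
  proof -
    have "(normA A y)^2 = Re (cinner (A y) y)" by (simp add: normA_sq[OF A] cinnerA_def)
    also have "\<dots> \<le> cmod (cinner (A y) y)" by (rule complex_Re_le_cmod)
    also have "\<dots> \<le> norm (A y) * norm y" by (rule cinner_cs)
    also have "\<dots> \<le> (KA * norm y) * norm y" by (intro mult_right_mono KA(2)) simp
    also have "\<dots> = (sqrt KA * norm y)^2" using KA(1) by (simp add: power2_eq_square)
    finally show ?thesis by (rule power2_le_imp_le) (simp add: KA(1))
  qed
  have unit: "normA A (S x) \<le> K" if x1: "normA A x = 1" for x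
  proof (rule ccontr)
    assume "\<not> ?thesis"
    then have gt: "normA A (S x) > K" by simp
    define r where "r = normA A (S x) / K"
    have r1: "r > 1" using gt K1 by (simp add: r_def)
    have rb: "r ^ (2^n) \<le> sqrt KA * norm x" for n
    proof -
      have "normA A (S x) ^ (2^n) \<le> normA A x ^ (2^n - 1) * normA A ((S ^^ (2^n)) x)"
        by (rule pow_trick[OF A sym])
      also have "\<dots> = normA A ((S ^^ (2^n)) x)" using x1 by simp
      also have "\<dots> \<le> sqrt KA * norm ((S ^^ (2^n)) x)" by (rule nAb)
      also have "\<dots> \<le> sqrt KA * (K ^ (2^n) * norm x)" by (intro mult_left_mono powb) (simp add: KA(1))
      finally have "normA A (S x) ^ (2^n) \<le> K ^ (2^n) * (sqrt KA * norm x)" by (simp add: algebra_simps)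
      moreover have "normA A (S x) ^ (2^n) = r ^ (2^n) * K ^ (2^n)"
        using K1 by (simp add: r_def power_divide)
      ultimately have "r ^ (2^n) * K ^ (2^n) \<le> (sqrt KA * norm x) * K ^ (2^n)" by (simp add: mult.commute)
      moreover have "K ^ (2^n) > 0" using K1 by simp
      ultimately show ?thesis by simp
    qed
    obtain n where n: "sqrt KA * norm x < r ^ n" using real_arch_pow[OF r1] by blast
    have "r ^ n \<le> r ^ (2^n)" using r1 by (intro power_increasing) (simp_all add: less_imp_le)
    then show False using n rb[of n] by simp
  qed
  have "normA A (S x) \<le> K * normA A x" for x
  proof (cases "normA A x = 0")
    case True
    have "(normA A (S x))^2 \<le> normA A x * normA A (S (S x))"
      by (rule sq_le_prod[OF A]) (simp add: sym)
    then have "(normA A (S x))^2 \<le> 0" using True by simp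
    then show ?thesis using True by simp
  next
    case False
    then have p: "normA A x > 0" using normA_nonneg[OF A, of x] by simp
    define x' where "x' = complex_of_real (1 / normA A x) *\<^sub>C x"
    have "normA A x' = 1" using p by (simp add: x'_def normA_sc[OF A] norm_divide)
    then have "normA A (S x') \<le> K" by (rule unit)
    moreover have "normA A (S x') = normA A (S x) / normA A x"
      using p by (simp add: x'_def lin normA_sc[OF A] norm_divide)
    ultimately show ?thesis using p by (simp add: divide_le_eq)
  qed
  then show ?thesis using K1 by (intro exI[of _ K]) simp
qed

lemma BA_Abounded:
  fixes A C :: "'a::chilbert_space \<Rightarrow> 'a"
  assumes A: "positive_op A" and C: "C \<in> BA A"
  shows "\<exists>c\<ge>0. \<forall>x. normA A (C x) \<le> c * normA A x"
proof -
  obtain T where Cl: "cbounded_linear C" and Tl: "cbounded_linear T"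
    and T: "\<And>x y. cinnerA A (C x) y = cinnerA A x (T y)"
    using BA_witness[OF C] by blast
  note h = sip.herm[OF cinnerA_sip[OF A]]
  have Tadj: "cinnerA A (T u) y = cinnerA A u (C y)" for u y
    by (metis T h)
  have sym: "cinnerA A ((T \<circ> C) x) y = cinnerA A x ((T \<circ> C) y)" for x y
    by (simp add: Tadj T)
  obtain KC where KC: "KC \<ge> 0" "\<And>x. norm (C x) \<le> KC * norm x" using cbl_bound[OF Cl] by blast
  obtain KT where KT: "KT \<ge> 0" "\<And>x. norm (T x) \<le> KT * norm x" using cbl_bound[OF Tl] by blast
  have bnd: "norm ((T \<circ> C) x) \<le> (KT * KC) * norm x" for x
  proof -
    have "norm (T (C x)) \<le> KT * norm (C x)" by (rule KT(2))
    also have "\<dots> \<le> KT * (KC * norm x)" by (intro mult_left_mono KC(2) KT(1))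
    finally show ?thesis by (simp add: mult.assoc)
  qed
  obtain K where K: "K \<ge> 0" "\<And>x. normA A ((T \<circ> C) x) \<le> K * normA A x"
    using A_bounded_sym[OF A sym _ bnd] by (auto simp: cbl_scale[OF Cl] cbl_scale[OF Tl])
  have "normA A (C x) \<le> sqrt K * normA A x" for x
  proof -
    have "(normA A (C x))^2 \<le> normA A x * normA A (T (C x))"
      by (rule sq_le_prod[OF A]) (simp add: T)
    also have "\<dots> \<le> normA A x * (K * normA A x)"
      using K(2)[of x] by (intro mult_left_mono) (simp_all add: normA_nonneg[OF A])
    also have "\<dots> = (sqrt K * normA A x)^2" using K(1) by (simp add: power2_eq_square)
    finally show ?thesis by (rule power2_le_imp_le) (simp add: K(1) normA_nonneg[OF A])
  qed
  then show ?thesis using K(1) by (intro exI[of _ "sqrt K"]) simp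
qed

lemma adj_Abounded:
  fixes A C D :: "'a::chilbert_space \<Rightarrow> 'a"
  assumes A: "positive_op A" and adj: "\<And>x y. cinnerA A (D x) y = cinnerA A x (C y)"
    and c: "c \<ge> 0" "\<And>x. normA A (C x) \<le> c * normA A x"
  shows "normA A (D x) \<le> c * normA A x"
proof -
  have "(normA A (D x))^2 \<le> normA A x * normA A (C (D x))"
    by (rule sq_le_prod[OF A]) (simp add: adj)
  also have "\<dots> \<le> normA A x * (c * normA A (D x))"
    by (intro mult_left_mono c(2)) (simp add: normA_nonneg[OF A])
  finally have "normA A (D x) * normA A (D x) \<le> (c * normA A x) * normA A (D x)"
    by (simp add: power2_eq_square algebra_simps)
  then show ?thesis
    by (cases "normA A (D x) = 0") (auto simp: c normA_nonneg[OF A] less_le)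
qed

lemma real_key:
  fixes d P S r g T :: real
  assumes P0: "0 \<le> P" and Pd: "P^2 \<le> d" and S0: "0 \<le> S" and Sr: "S^2 \<le> (d - P^2) * r"
    and r0: "0 \<le> r" and T: "(d^2 + r)^2 \<le> T" and g: "\<bar>d * P - S\<bar> \<le> g"
  shows "(P^2 + d^2)^2 \<le> (d^2 + r) + T + 2 * g^2"
proof -
  define a where "a = P^2"
  have a0: "0 \<le> a" by (simp add: a_def)
  have ad: "a \<le> d" using Pd by (simp add: a_def)
  have g2: "(d * P - S)^2 \<le> g^2"
  proof -
    have "\<bar>d * P - S\<bar> \<le> \<bar>g\<bar>" using g by simp
    then show ?thesis by (simp add: abs_le_square_iff)
  qed
  have K: "a^2 \<le> d^2 + r * (1 + 2 * d^2) - 4 * d * P * S + 2 * S^2"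
  proof (cases "a = d")
    case True
    then have "S^2 \<le> 0" using Sr by (simp add: a_def)
    then have "S = 0" using S0 by simp
    then show ?thesis using True r0 by simp
  next
    case False
    then have e: "d - a > 0" using ad by simp
    have id: "(d - a) * (d^2 + r * (1 + 2 * d^2) - 4 * d * P * S + 2 * S^2 - a^2)
      = (d - a)^3 + S^2 * (1 + 2 * (d - a)) + (1 + 2 * d^2) * ((d - a) * r - S^2)
        + 2 * (d * S - P * (d - a))^2"
      unfolding a_def by algebra
    have t1: "0 \<le> (d - a)^3" using e by simp
    have t2: "0 \<le> S^2 * (1 + 2 * (d - a))" using e by simp
    have t3: "0 \<le> (1 + 2 * d^2) * ((d - a) * r - S^2)"
      using Sr by (intro mult_nonneg_nonneg) (simp_all add: a_def algebra_simps)
    have t4: "0 \<le> 2 * (d * S - P * (d - a))^2" by simp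
    have "0 \<le> (d - a) * (d^2 + r * (1 + 2 * d^2) - 4 * d * P * S + 2 * S^2 - a^2)"
      unfolding id using t1 t2 t3 t4 by linarith
    then have "0 \<le> d^2 + r * (1 + 2 * d^2) - 4 * d * P * S + 2 * S^2 - a^2"
      using e by (simp add: zero_le_mult_iff)
    then show ?thesis by simp
  qed
  have K': "a^2 \<le> d^2 + r + 2 * (d^2 * r) - 4 * (d * P * S) + 2 * S^2"
    using K by (simp add: algebra_simps)
  have e1: "(P^2 + d^2)^2 = a^2 + 2 * (a * d^2) + d^4" by (simp add: a_def power2_eq_square power4_eq_xxxx algebra_simps)
  have e2: "(d^2 + r)^2 = d^4 + 2 * (d^2 * r) + r^2" by (simp add: power2_eq_square power4_eq_xxxx algebra_simps)
  have e3: "(d * P - S)^2 = a * d^2 - 2 * (d * P * S) + S^2" by (simp add: a_def power2_eq_square algebra_simps)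
  have r2: "0 \<le> r^2" by simp
  show ?thesis using K' e1 e2 e3 T g2 r2 by linarith
qed

context sip begin

lemma pointwise:
  assumes z1: "Re (ip z z) = 1" and vz: "ip v z = ip w w" and tz: "ip t z = ip v v"
  shows "((cmod (ip w z))^2 + (Re (ip w w))^2)^2 \<le> Re (ip v v) + Re (ip t t) + 2 * (cmod (ip w v))^2"
proof -
  define d where "d = Re (ip w w)"
  have wwd: "ip w w = complex_of_real d" unfolding d_def by (rule real_diag)
  have zz: "ip z z = 1" using real_diag[of z] z1 by simp
  define p where "p = ip w z"
  have Pd: "(cmod p)^2 \<le> d" using cs[of w z] z1 by (simp add: p_def d_def)
  define r where "r = v - sc (complex_of_real d) z"
  have vzd: "ip v z = complex_of_real d" using vz wwd by simp
  have rr: "Re (ip r r) = Re (ip v v) - d^2"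
    unfolding r_def expand vzd using z1 by (simp add: power2_eq_square)
  define wp where "wp = w - sc p z"
  have wpwp: "Re (ip wp wp) = d - (cmod p)^2"
  proof -
    have "Re (ip wp wp) = d - 2 * Re (cnj p * p) + (cmod p)^2"
      unfolding wp_def expand using z1 by (simp add: d_def p_def)
    also have "cnj p * p = complex_of_real ((cmod p)^2)"
    proof -
      have "p * cnj p = complex_of_real ((cmod p)^2)" by (rule complex_norm_square[symmetric])
      then show ?thesis by (simp add: mult.commute)
    qed
    finally show ?thesis by simp
  qed
  have rz: "ip r z = 0" by (simp add: r_def diff_left sc_left vzd zz)
  have zr: "ip z r = 0" using rz herm[of z r] by simp
  define q where "q = ip wp r"
  have wv: "ip w v = complex_of_real d * p + q"
  proof -
    have "q = ip w r" by (simp add: q_def wp_def diff_left sc_left zr)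
    also have "\<dots> = ip w v - complex_of_real d * p" by (simp add: r_def diff_right sc_right p_def)
    finally show ?thesis by simp
  qed
  have Sr: "(cmod q)^2 \<le> (d - (cmod p)^2) * Re (ip r r)"
    using cs[of wp r] by (simp add: q_def wpwp)
  have r0: "0 \<le> Re (ip r r)" by (rule pos)
  have d0: "0 \<le> d" using Pd by (meson order_trans zero_le_power2)
  have T: "(d^2 + Re (ip r r))^2 \<le> Re (ip t t)"
  proof -
    have "(d^2 + Re (ip r r))^2 = (Re (ip v v))^2" using rr by simp
    also have "\<dots> = (cmod (ip t z))^2" using tz real_diag[of v] by (metis norm_of_real power2_abs)
    also have "\<dots> \<le> Re (ip t t) * Re (ip z z)" by (rule cs)
    finally show ?thesis using z1 by simp
  qed
  have g: "\<bar>d * cmod p - cmod q\<bar> \<le> cmod (ip w v)"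
  proof -
    have "\<bar>cmod (complex_of_real d * p) - cmod (- q)\<bar> \<le> cmod (complex_of_real d * p - - q)"
      by (rule norm_triangle_ineq3)
    then show ?thesis using d0 by (simp add: wv norm_mult)
  qed
  have "((cmod p)^2 + d^2)^2 \<le> (d^2 + Re (ip r r)) + Re (ip t t) + 2 * (cmod (ip w v))^2"
    by (rule real_key[OF norm_ge_zero Pd norm_ge_zero Sr r0 T g])
  then show ?thesis using rr by (simp add: p_def d_def)
qed

end

lemma cinnerA0_sip:
  assumes A: "positive_op A"
  shows "sip (cinnerA0 A) (\<lambda>c z. (c *\<^sub>C fst z, c *\<^sub>C snd z))"
proof -
  interpret s: sip "cinnerA A" scaleC by (rule cinnerA_sip[OF A])
  show ?thesis
  proof
    fix x y z :: "'a \<times> 'a" and c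
    show "cinnerA0 A (x + y) z = cinnerA0 A x z + cinnerA0 A y z"
      by (simp add: cinnerA0_def s.add_left)
    show "cinnerA0 A (c *\<^sub>C fst x, c *\<^sub>C snd x) y = c * cinnerA0 A x y"
      by (simp add: cinnerA0_def s.sc_left distrib_left)
    show "cinnerA0 A x y = cnj (cinnerA0 A y x)"
      by (simp add: cinnerA0_def s.herm[of "fst x"] s.herm[of "snd x"])
    show "0 \<le> Re (cinnerA0 A x x)"
      using s.pos[of "fst x"] s.pos[of "snd x"] by (simp add: cinnerA0_def)
  qed
qed

lemma omega_le:
  fixes A M :: "'a::chilbert_space \<Rightarrow> 'a"
  assumes A: "positive_op A"
    and bdd: "bdd_above {cmod (cinnerA A (M z) z) | z. normA A z = 1}"
    and lin: "\<And>c x. M (c *\<^sub>C x) = c *\<^sub>C M x"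
    and null: "\<And>x. normA A x = 0 \<Longrightarrow> cinnerA A (M x) x = 0"
  shows "cmod (cinnerA A (M x) x) \<le> omegaA A M * (normA A x)^2"
proof (cases "normA A x = 0")
  case True then show ?thesis using null by simp
next
  case False
  interpret s: sip "cinnerA A" scaleC by (rule cinnerA_sip[OF A])
  define n where "n = normA A x"
  have n0: "n > 0" using False normA_nonneg[OF A, of x] by (simp add: n_def)
  define x' where "x' = complex_of_real (1 / n) *\<^sub>C x"
  have "normA A x' = 1" using n0 by (simp add: x'_def normA_sc[OF A] norm_divide n_def)
  then have "cmod (cinnerA A (M x') x') \<le> omegaA A M"
    unfolding omegaA_def by (intro cSup_upper bdd) blast
  moreover have "cinnerA A (M x') x' = cinnerA A (M x) x / complex_of_real (n^2)"
    by (simp add: x'_def lin s.sc_left s.sc_right power2_eq_square)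
  ultimately have "cmod (cinnerA A (M x) x) / n^2 \<le> omegaA A M"
    using n0 by (simp add: norm_divide norm_power)
  then show ?thesis using n0 by (simp add: n_def divide_le_eq mult.commute)
qed

lemma quartic:
  fixes A P :: "'a::chilbert_space \<Rightarrow> 'a"
  assumes A: "positive_op A"
    and sym: "\<And>u y. cinnerA A (P u) y = cinnerA A u (P y)"
    and lin: "\<And>c x. P (c *\<^sub>C x) = c *\<^sub>C P x"
    and c: "c \<ge> 0" "\<And>x. normA A (P x) \<le> c * normA A x"
  shows "cmod (cinnerA A ((P ^^ 2) x + (P ^^ 4) x) x)
          = Re (cinnerA A (P x) (P x)) + Re (cinnerA A (P (P x)) (P (P x)))"
    and "cmod (cinnerA A ((P ^^ 2) x + (P ^^ 4) x) x)
          \<le> omegaA A (\<lambda>x. (P ^^ 2) x + (P ^^ 4) x) * (normA A x)^2"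
proof -
  interpret s: sip "cinnerA A" scaleC by (rule cinnerA_sip[OF A])
  have val: "cinnerA A ((P ^^ 2) u + (P ^^ 4) u) u
      = complex_of_real ((normA A (P u))^2 + (normA A (P (P u)))^2)" for u
  proof -
    have "(P ^^ 2) u = P (P u)" by (simp add: numeral_2_eq_2)
    moreover have "(P ^^ 4) u = P (P (P (P u)))" by (simp add: numeral_eq_Suc)
    ultimately have "cinnerA A ((P ^^ 2) u + (P ^^ 4) u) u
        = cinnerA A (P u) (P u) + cinnerA A (P (P u)) (P (P u))"
      by (simp add: s.add_left sym)
    also have "\<dots> = complex_of_real (Re (cinnerA A (P u) (P u)))
        + complex_of_real (Re (cinnerA A (P (P u)) (P (P u))))"
      by (simp add: s.real_diag[symmetric])
    finally show ?thesis by (simp add: normA_sq[OF A])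
  qed
  have cm: "cmod (cinnerA A ((P ^^ 2) u + (P ^^ 4) u) u) = (normA A (P u))^2 + (normA A (P (P u)))^2" for u
    unfolding val norm_of_real by simp
  show "cmod (cinnerA A ((P ^^ 2) x + (P ^^ 4) x) x)
          = Re (cinnerA A (P x) (P x)) + Re (cinnerA A (P (P x)) (P (P x)))"
    by (simp add: cm normA_sq[OF A])
  have bdd: "bdd_above {cmod (cinnerA A ((P ^^ 2) z + (P ^^ 4) z) z) | z. normA A z = 1}"
  proof (rule bdd_aboveI)
    fix e assume "e \<in> {cmod (cinnerA A ((P ^^ 2) z + (P ^^ 4) z) z) | z. normA A z = 1}"
    then obtain z where z: "normA A z = 1" and e: "e = (normA A (P z))^2 + (normA A (P (P z)))^2"
      using cm by auto
    have b1: "normA A (P z) \<le> c" using c(2)[of z] z by simp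
    have b2: "normA A (P (P z)) \<le> c * c"
      using c(2)[of "P z"] b1 c(1) by (meson mult_left_mono order_trans)
    have "(normA A (P z))^2 \<le> c^2" using b1 normA_nonneg[OF A] by (intro power_mono) auto
    moreover have "(normA A (P (P z)))^2 \<le> (c * c)^2" using b2 normA_nonneg[OF A] by (intro power_mono) auto
    ultimately show "e \<le> c^2 + (c * c)^2" using e by simp
  qed
  show "cmod (cinnerA A ((P ^^ 2) x + (P ^^ 4) x) x)
          \<le> omegaA A (\<lambda>x. (P ^^ 2) x + (P ^^ 4) x) * (normA A x)^2"
  proof (rule omega_le[OF A])
    show "bdd_above {cmod (cinnerA A ((P ^^ 2) z + (P ^^ 4) z) z) | z. normA A z = 1}" by (rule bdd)
    fix c' :: complex and u :: 'a
    have p2: "(P ^^ 2) v = P (P v)" for v by (simp add: numeral_2_eq_2)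
    have p4: "(P ^^ 4) v = P (P (P (P v)))" for v by (simp add: numeral_eq_Suc)
    show "(P ^^ 2) (c' *\<^sub>C u) + (P ^^ 4) (c' *\<^sub>C u) = c' *\<^sub>C ((P ^^ 2) u + (P ^^ 4) u)"
      by (simp add: p2 p4 lin scaleC_add_right)
  next
    fix u :: 'a assume u: "normA A u = 0"
    have "normA A (P u) = 0" using c(2)[of u] u normA_nonneg[OF A, of "P u"] by simp
    moreover then have "normA A (P (P u)) = 0" using c(2)[of "P u"] normA_nonneg[OF A, of "P (P u)"] by simp
    ultimately show "cinnerA A ((P ^^ 2) u + (P ^^ 4) u) u = 0" by (simp add: val)
  qed
qed

lemma exists_unit:
  fixes A :: "'a::chilbert_space \<Rightarrow> 'a"
  assumes A: "positive_op A" and A0: "A \<noteq> (\<lambda>x. 0)"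
  shows "\<exists>x. normA A x = 1"
proof (rule ccontr)
  assume no: "\<not> ?thesis"
  interpret s: sip "cinnerA A" scaleC by (rule cinnerA_sip[OF A])
  have all0: "normA A x = 0" for x
  proof (rule ccontr)
    assume "normA A x \<noteq> 0"
    then have n0: "normA A x > 0" using normA_nonneg[OF A, of x] by simp
    have "normA A (complex_of_real (1 / normA A x) *\<^sub>C x) = 1"
      using n0 by (simp add: normA_sc[OF A] norm_divide)
    then show False using no by blast
  qed
  obtain x0 where x0: "A x0 \<noteq> 0" using A0 by (metis ext)
  have "cmod (cinnerA A x0 (A x0)) \<le> normA A x0 * normA A (A x0)" by (rule csA[OF A])
  then have "cinnerA A x0 (A x0) = 0" using all0 by simp
  then have "cinner (A x0) (A x0) = 0" by (simp add: cinnerA_def)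
  then show False using x0 by (simp add: cinner_eq_zero_iff)
qed

lemma main_gen:
  fixes A B C Bs Cs :: "'a::chilbert_space \<Rightarrow> 'a"
  assumes A: "positive_op A" and A0: "A \<noteq> (\<lambda>x. 0)"
    and Cadj: "\<And>u y. cinnerA A (Cs u) y = cinnerA A u (C y)"
    and Badj: "\<And>u y. cinnerA A (Bs u) y = cinnerA A u (B y)"
    and Clin: "\<And>c x. C (c *\<^sub>C x) = c *\<^sub>C C x" and Cslin: "\<And>c x. Cs (c *\<^sub>C x) = c *\<^sub>C Cs x"
    and Blin: "\<And>c x. B (c *\<^sub>C x) = c *\<^sub>C B x" and Bslin: "\<And>c x. Bs (c *\<^sub>C x) = c *\<^sub>C Bs x"
    and Cb: "cC \<ge> 0" "\<And>x. normA A (C x) \<le> cC * normA A x"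
    and Csb: "cCs \<ge> 0" "\<And>x. normA A (Cs x) \<le> cCs * normA A x"
    and Bb: "cB \<ge> 0" "\<And>x. normA A (B x) \<le> cB * normA A x"
    and Bsb: "cBs \<ge> 0" "\<And>x. normA A (Bs x) \<le> cBs * normA A x"
  shows "(dwA0 A (opmat (\<lambda>x. 0) B C (\<lambda>x. 0))) ^ 4
    \<le> max (omegaA A (\<lambda>x. ((Cs \<circ> C) ^^ 2) x + ((Cs \<circ> C) ^^ 4) x))
           (omegaA A (\<lambda>x. ((Bs \<circ> B) ^^ 2) x + ((Bs \<circ> B) ^^ 4) x))
      + 2 * (omegaA0 A (opmat (\<lambda>x. 0) (Cs \<circ> C \<circ> B) (Bs \<circ> B \<circ> C) (\<lambda>x. 0))) ^ 2"
proof -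
  interpret s: sip "cinnerA A" scaleC by (rule cinnerA_sip[OF A])
  interpret s0: sip "cinnerA0 A" "\<lambda>c z. (c *\<^sub>C fst z, c *\<^sub>C snd z)" by (rule cinnerA0_sip[OF A])
  define P where "P = Cs \<circ> C"
  define Q where "Q = Bs \<circ> B"
  define wC where "wC = omegaA A (\<lambda>x. (P ^^ 2) x + (P ^^ 4) x)"
  define wB where "wB = omegaA A (\<lambda>x. (Q ^^ 2) x + (Q ^^ 4) x)"
  define Y where "Y = opmat (\<lambda>x. 0) (P \<circ> B) (Q \<circ> C) (\<lambda>x. 0)"
  define w0 where "w0 = omegaA0 A Y"
  define R where "R = max wC wB + 2 * w0^2"
  define X where "X = opmat (\<lambda>x. 0) B C (\<lambda>x. 0)"
  have Cadj': "cinnerA A u (Cs y) = cinnerA A (C u) y" for u y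
    by (metis Cadj s.herm)
  have Badj': "cinnerA A u (Bs y) = cinnerA A (B u) y" for u y
    by (metis Badj s.herm)
  have Psym: "cinnerA A (P u) y = cinnerA A u (P y)" for u y
    by (simp add: P_def Cadj Cadj')
  have Qsym: "cinnerA A (Q u) y = cinnerA A u (Q y)" for u y
    by (simp add: Q_def Badj Badj')
  have Plin: "P (c *\<^sub>C x) = c *\<^sub>C P x" for c x by (simp add: P_def Clin Cslin)
  have Qlin: "Q (c *\<^sub>C x) = c *\<^sub>C Q x" for c x by (simp add: Q_def Blin Bslin)
  have cP: "cCs * cC \<ge> 0" using Cb Csb by simp
  have cQ: "cBs * cB \<ge> 0" using Bb Bsb by simp
  have Pb: "normA A (P x) \<le> (cCs * cC) * normA A x" for x
  proof -
    have "normA A (P x) \<le> cCs * normA A (C x)" by (simp add: P_def Csb(2))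
    also have "\<dots> \<le> cCs * (cC * normA A x)" by (intro mult_left_mono Cb(2) Csb(1))
    finally show ?thesis by (simp add: mult.assoc)
  qed
  have Qb: "normA A (Q x) \<le> (cBs * cB) * normA A x" for x
  proof -
    have "normA A (Q x) \<le> cBs * normA A (B x)" by (simp add: Q_def Bsb(2))
    also have "\<dots> \<le> cBs * (cB * normA A x)" by (intro mult_left_mono Bb(2) Bsb(1))
    finally show ?thesis by (simp add: mult.assoc)
  qed
  note qP = quartic[OF A Psym Plin cP Pb]
  note qQ = quartic[OF A Qsym Qlin cQ Qb]
  have XZ: "X (x, y) = (B y, C x)" for x y by (simp add: X_def opmat_def)
  have YZ: "Y (x, y) = (P (B y), Q (C x))" for x y by (simp add: Y_def opmat_def)
  have nz: "(normA A x)^2 + (normA A y)^2 = 1" if "normA0 A (x, y) = 1" for x y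
  proof -
    have "Re (cinnerA0 A (x, y) (x, y)) = 1" using that by (simp add: normA0_def)
    then show ?thesis by (simp add: cinnerA0_def normA_sq[OF A])
  qed
  have le1: "normA A x \<le> 1" "normA A y \<le> 1" if "normA0 A (x, y) = 1" for x y
  proof -
    have sx: "0 \<le> (normA A x)^2" "0 \<le> (normA A y)^2" by simp_all
    have "(normA A x)^2 \<le> 1" "(normA A y)^2 \<le> 1" using nz[OF that] sx by linarith+
    then have h: "(normA A x)^2 \<le> 1^2" "(normA A y)^2 \<le> 1^2" by simp_all
    show "normA A x \<le> 1" by (rule power2_le_imp_le[OF h(1)]) simp
    show "normA A y \<le> 1" by (rule power2_le_imp_le[OF h(2)]) simp
  qed
  have bddY: "bdd_above {cmod (cinnerA0 A (Y z) z) | z. normA0 A z = 1}"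
  proof (rule bdd_aboveI)
    fix e assume "e \<in> {cmod (cinnerA0 A (Y z) z) | z. normA0 A z = 1}"
    then obtain x y where z1: "normA0 A (x, y) = 1" and e: "e = cmod (cinnerA0 A (Y (x, y)) (x, y))"
      by auto
    have nx: "0 \<le> normA A x" "normA A x \<le> 1" using le1[OF z1] normA_nonneg[OF A] by auto
    have ny: "0 \<le> normA A y" "normA A y \<le> 1" using le1[OF z1] normA_nonneg[OF A] by auto
    have "e \<le> cmod (cinnerA A (P (B y)) x) + cmod (cinnerA A (Q (C x)) y)"
      by (simp add: e YZ cinnerA0_def norm_triangle_ineq)
    also have "\<dots> \<le> normA A (P (B y)) * normA A x + normA A (Q (C x)) * normA A y"
      by (intro add_mono csA[OF A])
    also have "\<dots> \<le> (cCs * cC) * (cB * normA A y) * normA A x + (cBs * cB) * (cC * normA A x) * normA A y"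
    proof (intro add_mono mult_right_mono nx ny)
      have "normA A (P (B y)) \<le> (cCs * cC) * normA A (B y)" by (rule Pb)
      also have "\<dots> \<le> (cCs * cC) * (cB * normA A y)" by (intro mult_left_mono Bb(2) cP)
      finally show "normA A (P (B y)) \<le> (cCs * cC) * (cB * normA A y)" .
      have "normA A (Q (C x)) \<le> (cBs * cB) * normA A (C x)" by (rule Qb)
      also have "\<dots> \<le> (cBs * cB) * (cC * normA A x)" by (intro mult_left_mono Cb(2) cQ)
      finally show "normA A (Q (C x)) \<le> (cBs * cB) * (cC * normA A x)" .
    qed
    also have "\<dots> \<le> (cCs * cC) * (cB * 1) * 1 + (cBs * cB) * (cC * 1) * 1"
      using nx ny cP cQ Cb(1) Bb(1)
      by (intro add_mono mult_mono mult_left_mono) (simp_all add: mult_nonneg_nonneg)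
    finally show "e \<le> (cCs * cC) * (cB * 1) * 1 + (cBs * cB) * (cC * 1) * 1" .
  qed
  have per: "((cmod (cinnerA0 A (X z) z))^2 + (normA0 A (X z))^4)^2 \<le> R"
    if z1: "normA0 A z = 1" for z
  proof -
    obtain x y where z: "z = (x, y)" by (cases z)
    have z1': "normA0 A (x, y) = 1" using z1 z by simp
    define w where "w = (B y, C x)"
    define v where "v = (Cs (C x), Bs (B y))"
    define t where "t = (Cs (C (Cs (C x))), Bs (B (Bs (B y))))"
    have re1: "Re (cinnerA0 A (x, y) (x, y)) = 1" using z1' by (simp add: normA0_def)
    have vz: "cinnerA0 A v (x, y) = cinnerA0 A w w"
      by (simp add: v_def w_def cinnerA0_def Cadj Badj add.commute)
    have tz: "cinnerA0 A t (x, y) = cinnerA0 A v v"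
    proof -
      have a1: "cinnerA A (Cs (C (Cs (C x)))) x = cinnerA A (C (Cs (C x))) (C x)" by (rule Cadj)
      have a2: "cinnerA A (Cs (C x)) (Cs (C x)) = cinnerA A (C (Cs (C x))) (C x)" by (rule Cadj')
      have b1: "cinnerA A (Bs (B (Bs (B y)))) y = cinnerA A (B (Bs (B y))) (B y)" by (rule Badj)
      have b2: "cinnerA A (Bs (B y)) (Bs (B y)) = cinnerA A (B (Bs (B y))) (B y)" by (rule Badj')
      show ?thesis unfolding t_def v_def cinnerA0_def fst_conv snd_conv a1 a2 b1 b2 ..
    qed
    have pw: "((cmod (cinnerA0 A w (x, y)))^2 + (Re (cinnerA0 A w w))^2)^2
        \<le> Re (cinnerA0 A v v) + Re (cinnerA0 A t t) + 2 * (cmod (cinnerA0 A w v))^2"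
      by (rule s0.pointwise[OF re1 vz tz])
    have Xz: "X (x, y) = w" by (simp add: XZ w_def)
    have n4: "(normA0 A w)^4 = (Re (cinnerA0 A w w))^2"
    proof -
      have "0 \<le> Re (cinnerA0 A w w)" by (rule s0.pos)
      then have "(normA0 A w)^2 = Re (cinnerA0 A w w)" by (simp add: normA0_def)
      moreover have "(normA0 A w)^4 = ((normA0 A w)^2)^2" by simp
      ultimately show ?thesis by simp
    qed
    have vt: "Re (cinnerA0 A v v) + Re (cinnerA0 A t t)
        = cmod (cinnerA A ((P ^^ 2) x + (P ^^ 4) x) x) + cmod (cinnerA A ((Q ^^ 2) y + (Q ^^ 4) y) y)"
      unfolding qP(1) qQ(1) by (simp add: v_def t_def cinnerA0_def P_def Q_def)
    also have "\<dots> \<le> wC * (normA A x)^2 + wB * (normA A y)^2"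
      unfolding wC_def wB_def by (intro add_mono qP(2) qQ(2))
    also have "\<dots> \<le> max wC wB * (normA A x)^2 + max wC wB * (normA A y)^2"
      by (intro add_mono mult_right_mono) auto
    also have "\<dots> = max wC wB" using nz[OF z1'] by (simp add: distrib_left[symmetric])
    finally have vtb: "Re (cinnerA0 A v v) + Re (cinnerA0 A t t) \<le> max wC wB" .
    have wvY: "cinnerA0 A w v = cinnerA0 A (Y z) z"
      by (simp add: z YZ w_def v_def cinnerA0_def Psym Qsym) (simp add: P_def Q_def)
    have "cmod (cinnerA0 A (Y z) z) \<le> w0"
      unfolding w0_def omegaA0_def by (rule cSup_upper[OF _ bddY]) (use z1 in blast)
    then have "(cmod (cinnerA0 A w v))^2 \<le> w0^2"
      unfolding wvY by (intro power_mono) simp_all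
    then show ?thesis using pw vtb
      unfolding z Xz n4 R_def by linarith
  qed
  define D where "D = {sqrt ((cmod (cinnerA0 A (X z) z))^2 + (normA0 A (X z))^4) | z. normA0 A z = 1}"
  obtain x1 where x1: "normA A x1 = 1" using exists_unit[OF A A0] by blast
  have z0: "normA0 A (x1, 0) = 1"
    using x1 by (simp add: normA0_def cinnerA0_def normA_sq[OF A, symmetric])
  have elem: "0 \<le> e \<and> e \<le> sqrt (sqrt R)" if eD: "e \<in> D" for e
  proof -
    obtain z where z1: "normA0 A z = 1" and e: "e = sqrt ((cmod (cinnerA0 A (X z) z))^2 + (normA0 A (X z))^4)"
      using eD unfolding D_def by blast
    define st where "st = (cmod (cinnerA0 A (X z) z))^2 + (normA0 A (X z))^4"
    have st0: "0 \<le> st" by (simp add: st_def)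
    have "st^2 \<le> R" using per[OF z1] by (simp add: st_def)
    then have "st \<le> sqrt R" by (rule real_le_rsqrt)
    then have "sqrt st \<le> sqrt (sqrt R)" by (rule real_sqrt_le_mono)
    then show ?thesis using st0 by (simp add: e st_def)
  qed
  have Dne: "D \<noteq> {}" using z0 by (auto simp: D_def)
  have R0: "0 \<le> R"
  proof -
    have "0 \<le> ((cmod (cinnerA0 A (X (x1, 0)) (x1, 0)))^2 + (normA0 A (X (x1, 0)))^4)^2" by simp
    also have "\<dots> \<le> R" by (rule per[OF z0])
    finally show ?thesis .
  qed
  have bddD: "bdd_above D" using elem by (intro bdd_aboveI[of _ "sqrt (sqrt R)"]) blast
  have suple: "Sup D \<le> sqrt (sqrt R)" using elem Dne by (intro cSup_least) auto
  have sup0: "0 \<le> Sup D"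
  proof -
    obtain e where "e \<in> D" using Dne by blast
    then show ?thesis using elem bddD by (meson cSup_upper order_trans)
  qed
  have "(Sup D)^4 \<le> (sqrt (sqrt R))^4" using suple sup0 by (intro power_mono) auto
  also have "(sqrt (sqrt R))^4 = R"
  proof -
    have "(sqrt (sqrt R))^4 = ((sqrt (sqrt R))^2)^2" by simp
    also have "\<dots> = R" using R0 by simp
    finally show ?thesis .
  qed
  finally have final: "(dwA0 A X)^4 \<le> R" by (simp add: dwA0_def D_def)
  then show ?thesis by (simp add: R_def wC_def wB_def w0_def Y_def X_def P_def Q_def)
qed

theorem theorem3p11:
  fixes A B C :: "'a::chilbert_space \<Rightarrow> 'a"
  assumes "positive_op A" and "A \<noteq> (\<lambda>x. 0)"
    and "B \<in> BA A" and "C \<in> BA A"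
  shows "(dwA0 A (opmat (\<lambda>x. 0) B C (\<lambda>x. 0))) ^ 4
    \<le> max (omegaA A (\<lambda>x. ((sharpA A C \<circ> C) ^^ 2) x + ((sharpA A C \<circ> C) ^^ 4) x))
           (omegaA A (\<lambda>x. ((sharpA A B \<circ> B) ^^ 2) x + ((sharpA A B \<circ> B) ^^ 4) x))
      + 2 * (omegaA0 A (opmat (\<lambda>x. 0) (sharpA A C \<circ> C \<circ> B) (sharpA A B \<circ> B \<circ> C) (\<lambda>x. 0))) ^ 2"
proof -
  have A: "positive_op A" by (rule assms(1))
  have B: "B \<in> BA A" and C: "C \<in> BA A" by (rule assms(3), rule assms(4))
  have Bl: "cbounded_linear B" using B by (simp add: BA_def)
  have Cl: "cbounded_linear C" using C by (simp add: BA_def)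
  obtain cC where cC: "cC \<ge> 0" "\<And>x. normA A (C x) \<le> cC * normA A x"
    using BA_Abounded[OF A C] by blast
  obtain cB where cB: "cB \<ge> 0" "\<And>x. normA A (B x) \<le> cB * normA A x"
    using BA_Abounded[OF A B] by blast
  have cCs: "\<And>x. normA A (sharpA A C x) \<le> cC * normA A x"
    by (rule adj_Abounded[OF A sharp_prop[OF A C] cC])
  have cBs: "\<And>x. normA A (sharpA A B x) \<le> cB * normA A x"
    by (rule adj_Abounded[OF A sharp_prop[OF A B] cB])
  show ?thesis
    by (rule main_gen[OF A assms(2) sharp_prop[OF A C] sharp_prop[OF A B]
          cbl_scale[OF Cl] sharp_linear(2)[OF A C] cbl_scale[OF Bl] sharp_linear(2)[OF A B]
          cC cC(1) cCs cB cB(1) cBs])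
qed

end
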